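(* Let $\mathcal{Z}\subset\mathbb{R}^d$ be an integral, unit-generated lattice, and let $K$ be its Dirichlet region. Then $\partial K$ is contained in the union of the hyperplanes $\{x: x\cdot z=1/2\}$, where $z$ ranges over the elements of $\mathcal{Z}$ of norm $1$.
   Context: A lattice is a discrete additive subgroup of $\mathbb{R}^d$ with compact quotient. Integral: $z\cdot z\in\mathbb{Z}$ for all $z\in\mathcal{Z}$. Unit-generated: every element of $\mathcal{Z}$ is a sum of elements of $\mathcal{Z}$ of Euclidean norm $1$. Dirichlet region: $K=\{x:|x|\le|x-z|\ \forall z\in\mathcal{Z}\}$. *)

theory Defs
  imports "HOL-Analysis.Analysis"
begin

text \<open>A lattice in a Euclidean space: a discrete additive subgroup with compact
  quotient (equivalently: some bounded set of representatives covers the space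
  by translates).\<close>
definition is_lattice :: "'a::euclidean_space set \<Rightarrow> bool" where
  "is_lattice Z \<longleftrightarrow>
     0 \<in> Z \<and> (\<forall>x\<in>Z. \<forall>y\<in>Z. x - y \<in> Z) \<and>
     (\<exists>e>0. \<forall>z\<in>Z. z \<noteq> 0 \<longrightarrow> e \<le> norm z) \<and>
     (\<exists>B. bounded B \<and> (\<forall>x. \<exists>z\<in>Z. \<exists>b\<in>B. x = z + b))"

definition integral_lattice :: "'a::euclidean_space set \<Rightarrow> bool" where
  "integral_lattice Z \<longleftrightarrow> (\<forall>z\<in>Z. z \<bullet> z \<in> \<int>)"

definition unit_vectors_of :: "'a::euclidean_space set \<Rightarrow> 'a set" where
  "unit_vectors_of Z = {z \<in> Z. norm z = 1}"

definition unit_generated :: "'a::euclidean_space set \<Rightarrow> bool" where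
  "unit_generated Z \<longleftrightarrow>
     (\<forall>z\<in>Z. \<exists>xs. set xs \<subseteq> unit_vectors_of Z \<and> sum_list xs = z)"

definition dirichlet_region :: "'a::euclidean_space set \<Rightarrow> 'a set" where
  "dirichlet_region Z = {x. \<forall>z\<in>Z. norm x \<le> norm (x - z)}"

end

theory Submission
  imports Defs
begin

definition minrep :: "'a::euclidean_space set \<Rightarrow> 'a list \<Rightarrow> bool" where
  "minrep Z xs \<longleftrightarrow> set xs \<subseteq> unit_vectors_of Z \<and>
     (\<forall>ys. set ys \<subseteq> unit_vectors_of Z \<and> sum_list ys = sum_list xs \<longrightarrow> length xs \<le> length ys)"

lemma minrep_tl:
  assumes "minrep Z (a # xs)" shows "minrep Z xs"
proof -
  have "length xs \<le> length ys" if "set ys \<subseteq> unit_vectors_of Z" "sum_list ys = sum_list xs" for ys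
  proof -
    have "set (a # ys) \<subseteq> unit_vectors_of Z" "sum_list (a # ys) = sum_list (a # xs)"
      using assms that by (auto simp: minrep_def)
    then have "length (a # xs) \<le> length (a # ys)" using assms unfolding minrep_def by blast
    then show ?thesis by simp
  qed
  then show ?thesis using assms by (auto simp: minrep_def)
qed

lemma lat_add:
  assumes "is_lattice Z" "a \<in> Z" "b \<in> Z" shows "a + b \<in> Z"
proof -
  have "0 - b \<in> Z" using assms unfolding is_lattice_def by blast
  then have "a - (0 - b) \<in> Z" using assms unfolding is_lattice_def by blast
  then show ?thesis by simp
qed

lemma minrep_pair:
  assumes L: "is_lattice Z" and I: "integral_lattice Z"
    and m: "minrep Z (a # xs)" and b: "b \<in> set xs"
  shows "a \<bullet> b \<ge> 0"
proof (rule ccontr)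
  assume neg: "\<not> a \<bullet> b \<ge> 0"
  obtain p q where xs: "xs = p @ b # q" using b split_list by metis
  have aU: "a \<in> unit_vectors_of Z" and bU: "b \<in> unit_vectors_of Z"
    using m b by (auto simp: minrep_def)
  then have aZ: "a \<in> Z" "norm a = 1" and bZ: "b \<in> Z" "norm b = 1"
    by (auto simp: unit_vectors_of_def)
  have abZ: "a + b \<in> Z" using lat_add[OF L aZ(1) bZ(1)] .
  have nn: "(a+b) \<bullet> (a+b) = a \<bullet> a + 2 * (a \<bullet> b) + b \<bullet> b"
    by (simp add: inner_add_left inner_add_right inner_commute)
  have aa: "a \<bullet> a = 1" "b \<bullet> b = 1" using aZ bZ by (metis norm_eq_sqrt_inner real_sqrt_eq_1_iff)+
  have lt2: "(a+b) \<bullet> (a+b) < 2" using nn aa neg by linarith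
  have intg: "(a+b) \<bullet> (a+b) \<in> \<int>" using I abZ unfolding integral_lattice_def by blast
  then obtain k :: int where k: "(a+b) \<bullet> (a+b) = of_int k" by (metis Ints_cases)
  have "k \<le> 1" using lt2 k by linarith
  have "k \<ge> 0" using k inner_ge_zero[of "a+b"] by linarith
  have sums: "sum_list (a # xs) = (a + b) + sum_list (p @ q)" using xs by (simp add: algebra_simps)
  show False
  proof (cases "k = 0")
    case True
    then have "a + b = 0" using k by simp
    then have "set (p @ q) \<subseteq> unit_vectors_of Z" "sum_list (p @ q) = sum_list (a # xs)"
      using m xs sums by (auto simp: minrep_def)
    then have "length (a # xs) \<le> length (p @ q)" using m unfolding minrep_def by blast
    then show False using xs by simp
  next
    case False
    then have "k = 1" using \<open>k \<le> 1\<close> \<open>k \<ge> 0\<close> by simp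
    then have "norm (a + b) = 1" using k by (simp add: norm_eq_sqrt_inner)
    then have "a + b \<in> unit_vectors_of Z" using abZ by (simp add: unit_vectors_of_def)
    then have "set ((a+b) # p @ q) \<subseteq> unit_vectors_of Z" "sum_list ((a+b) # p @ q) = sum_list (a # xs)"
      using m xs sums by (auto simp: minrep_def)
    then have "length (a # xs) \<le> length ((a+b) # p @ q)" using m unfolding minrep_def by blast
    then show False using xs by simp
  qed
qed

lemma inner_sum_list: "a \<bullet> sum_list xs = sum_list (map (\<lambda>b. a \<bullet> b) xs)"
  by (induction xs) (auto simp: inner_add_right)

lemma minrep_len:
  assumes L: "is_lattice Z" and I: "integral_lattice Z" and m: "minrep Z xs"
  shows "real (length xs) \<le> sum_list xs \<bullet> sum_list xs"
  using m
proof (induction xs)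
  case Nil then show ?case by simp
next
  case (Cons a xs)
  have IH: "real (length xs) \<le> sum_list xs \<bullet> sum_list xs" using Cons minrep_tl by blast
  have "a \<in> unit_vectors_of Z" using Cons.prems by (auto simp: minrep_def)
  then have "norm a = 1" by (simp add: unit_vectors_of_def)
  then have aa: "a \<bullet> a = 1" by (metis norm_eq_sqrt_inner real_sqrt_eq_1_iff)
  have "0 \<le> sum_list (map (\<lambda>b. a \<bullet> b) xs)"
    by (rule sum_list_nonneg) (use minrep_pair[OF L I Cons.prems] in auto)
  then have pos: "0 \<le> a \<bullet> sum_list xs" by (simp add: inner_sum_list)
  have "(a + sum_list xs) \<bullet> (a + sum_list xs) = a \<bullet> a + 2 * (a \<bullet> sum_list xs) + sum_list xs \<bullet> sum_list xs"
    by (simp add: inner_add_left inner_add_right inner_commute)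
  then show ?case using IH pos aa by simp
qed

lemma K_eq:
  assumes L: "is_lattice Z" and I: "integral_lattice Z" and U: "unit_generated Z"
  shows "dirichlet_region Z = {x. \<forall>u\<in>unit_vectors_of Z. x \<bullet> u \<le> 1/2}"
proof (intro set_eqI iffI)
  fix x assume "x \<in> dirichlet_region Z"
  then have h: "\<forall>z\<in>Z. norm x \<le> norm (x - z)" by (simp add: dirichlet_region_def)
  show "x \<in> {x. \<forall>u\<in>unit_vectors_of Z. x \<bullet> u \<le> 1/2}"
  proof safe
    fix u assume u: "u \<in> unit_vectors_of Z"
    then have "u \<in> Z" "norm u = 1" by (auto simp: unit_vectors_of_def)
    then have "norm x ^ 2 \<le> norm (x - u) ^ 2" using h by (simp add: power_mono)
    moreover have "norm (x - u) ^ 2 = norm x ^ 2 - 2 * (x \<bullet> u) + norm u ^ 2"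
      by (simp add: power2_norm_eq_inner inner_diff_left inner_diff_right inner_commute)
    ultimately show "x \<bullet> u \<le> 1/2" using \<open>norm u = 1\<close> by simp
  qed
next
  fix x assume "x \<in> {x. \<forall>u\<in>unit_vectors_of Z. x \<bullet> u \<le> 1/2}"
  then have h: "\<forall>u\<in>unit_vectors_of Z. x \<bullet> u \<le> 1/2" by simp
  have "norm x \<le> norm (x - z)" if z: "z \<in> Z" for z
  proof -
    define P where "P = (\<lambda>n. \<exists>xs. set xs \<subseteq> unit_vectors_of Z \<and> sum_list xs = z \<and> length xs = n)"
    obtain xs0 where "set xs0 \<subseteq> unit_vectors_of Z" "sum_list xs0 = z"
      using U z unfolding unit_generated_def by blast
    then have "P (length xs0)" unfolding P_def by blast
    then obtain n where Pn: "P n" and least: "\<And>m. m < n \<Longrightarrow> \<not> P m"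
      using exists_least_iff[of P] by blast
    then obtain xs where xs: "set xs \<subseteq> unit_vectors_of Z" "sum_list xs = z" "length xs = n"
      unfolding P_def by blast
    have "minrep Z xs" unfolding minrep_def
    proof (intro conjI allI impI)
      fix ys assume "set ys \<subseteq> unit_vectors_of Z \<and> sum_list ys = sum_list xs"
      then have "P (length ys)" using xs unfolding P_def by blast
      then show "length xs \<le> length ys" using least xs(3) not_le by blast
    qed (use xs in auto)
    have len0: "real (length xs) \<le> sum_list xs \<bullet> sum_list xs" by (rule minrep_len[OF L I \<open>minrep Z xs\<close>])
    have len: "real (length xs) \<le> z \<bullet> z" using len0 unfolding xs(2) .
    have "x \<bullet> z = sum_list (map (\<lambda>b. x \<bullet> b) xs)" using xs inner_sum_list by metis
    also have "\<dots> \<le> sum_list (map (\<lambda>b. 1/2) xs)"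
      by (rule sum_list_mono) (use h xs in auto)
    also have "\<dots> = real (length xs) / 2" by (simp add: sum_list_triv)
    finally have "2 * (x \<bullet> z) \<le> z \<bullet> z" using len by simp
    then have "norm x ^ 2 \<le> norm (x - z) ^ 2"
      by (simp add: power2_norm_eq_inner inner_diff_left inner_diff_right inner_commute)
    then show ?thesis using power2_le_imp_le norm_ge_zero by blast
  qed
  then show "x \<in> dirichlet_region Z" by (simp add: dirichlet_region_def)
qed

lemma units_compact:
  assumes L: "is_lattice Z" shows "compact (unit_vectors_of Z)"
proof -
  obtain e where e: "e > 0" "\<forall>z\<in>Z. z \<noteq> 0 \<longrightarrow> e \<le> norm z" using L unfolding is_lattice_def by blast
  have "closed Z"
  proof (rule discrete_imp_closed[OF e(1)], intro ballI impI)
    fix x y assume "x \<in> Z" "y \<in> Z" "dist y x < e"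
    then have "y - x \<in> Z" using L unfolding is_lattice_def by blast
    then show "y = x" using e \<open>dist y x < e\<close> by (metis dist_norm not_le eq_iff_diff_eq_0)
  qed
  then have "closed (Z \<inter> sphere 0 1)" by (simp add: closed_Int)
  moreover have "unit_vectors_of Z = Z \<inter> sphere 0 1" by (auto simp: unit_vectors_of_def)
  ultimately show ?thesis by (metis bounded_Int bounded_sphere compact_eq_bounded_closed)
qed

theorem lemma4p7:
  fixes Z :: "'a::euclidean_space set"
  assumes "is_lattice Z" and "integral_lattice Z" and "unit_generated Z"
  shows "frontier (dirichlet_region Z) \<subseteq>
           (\<Union>z\<in>unit_vectors_of Z. {x. x \<bullet> z = 1/2})"
proof
  fix x assume fx: "x \<in> frontier (dirichlet_region Z)"
  let ?U = "unit_vectors_of Z"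
  let ?H = "{x. \<forall>u\<in>?U. x \<bullet> u \<le> (1/2::real)}"
  have K: "dirichlet_region Z = ?H" using K_eq[OF assms] .
  have cH: "closed ?H"
  proof -
    have "?H = (\<Inter>u\<in>?U. {x. u \<bullet> x \<le> 1/2})"
    proof (rule set_eqI)
      fix y :: 'a
      have "\<And>u. y \<bullet> u = u \<bullet> y" by (rule inner_commute)
      then show "y \<in> ?H \<longleftrightarrow> y \<in> (\<Inter>u\<in>?U. {x. u \<bullet> x \<le> 1/2})"
        by (simp only: mem_Collect_eq INT_iff)
    qed
    moreover have "closed (\<Inter>u\<in>?U. {x. u \<bullet> x \<le> (1/2::real)})"
      by (rule closed_INT, rule ballI, rule closed_halfspace_le)
    ultimately show ?thesis by (simp only:)
  qed
  have cK: "closed (dirichlet_region Z)" using cH K by (simp only:)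
  have xin: "x \<in> dirichlet_region Z" using frontier_subset_closed[OF cK] fx by (rule subsetD)
  have xK: "\<forall>u\<in>?U. x \<bullet> u \<le> 1/2" using xin unfolding K by (simp only: mem_Collect_eq)
  show "x \<in> (\<Union>z\<in>?U. {x. x \<bullet> z = 1/2})"
  proof (rule ccontr)
    assume nx: "x \<notin> (\<Union>z\<in>?U. {x. x \<bullet> z = 1/2})"
    have lt: "x \<bullet> u < 1/2" if u: "u \<in> ?U" for u
    proof -
      have "x \<bullet> u \<noteq> 1/2" using nx u by blast
      moreover have "x \<bullet> u \<le> 1/2" using xK u by blast
      ultimately show ?thesis by linarith
    qed
    have "x \<in> interior (dirichlet_region Z)"
    proof (cases "?U = {}")
      case True
      then have "dirichlet_region Z = UNIV" unfolding K by blast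
      then show ?thesis by (simp only: interior_UNIV UNIV_I)
    next
      case False
      have cont: "continuous_on ?U (\<lambda>u. x \<bullet> u)" by (intro continuous_intros)
      obtain u0 where u0: "u0 \<in> ?U" "\<forall>u\<in>?U. x \<bullet> u \<le> x \<bullet> u0"
        using continuous_attains_sup[OF units_compact[OF assms(1)] False cont] by blast
      define d where "d = 1/2 - x \<bullet> u0"
      have d: "d > 0" using lt[OF u0(1)] unfolding d_def by linarith
      have sub: "ball x d \<subseteq> dirichlet_region Z"
      proof
        fix y assume "y \<in> ball x d"
        then have dy: "norm (y - x) < d" by (simp add: dist_norm norm_minus_commute)
        have "y \<bullet> u \<le> 1/2" if u: "u \<in> ?U" for u
        proof -
          have nu: "norm u = 1" using u by (simp add: unit_vectors_of_def)
          have "(y - x) \<bullet> u \<le> norm (y - x) * norm u" by (rule norm_cauchy_schwarz)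
          then have "y \<bullet> u - x \<bullet> u \<le> norm (y - x)" using nu by (simp add: inner_diff_left)
          moreover have "x \<bullet> u \<le> x \<bullet> u0" using u0(2) u by blast
          ultimately show ?thesis using dy unfolding d_def by linarith
        qed
        then show "y \<in> dirichlet_region Z" unfolding K by blast
      qed
      have "x \<in> ball x d" using d by simp
      then show ?thesis using interior_maximal[OF sub open_ball] by blast
    qed
    then show False using fx by (simp add: frontier_def)
  qed
qed

end
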